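(* Let $C$ be a set, $d$ a small category, and $p,q,r$ $(C\mathcal y,d)$-bicomodules. Define $$p\otimes_{C\mathcal y,d}q:=\sum_{a\in C}\sum_{(i,j)\in p_a(1)\times q_a(1)}\mathcal y^{\,p[i]\times_{d(1)}q[j]},\qquad [q,r]_{C\mathcal y,d}:=\sum_{a\in C}\ \sum_{\varphi\in\mathbf{Set}[d](q_a,r_a)}\mathcal y^{\,\sum_{j\in q_a(1)}r[\varphi(j)]},$$ where $p[i]\times_{d(1)}q[j]$ is the product of the $d$-copresheaves $p[i]$ and $q[j]$, and $\sum_{j}r[\varphi(j)]$ is the coproduct of $d$-copresheaves. Then $[q,r]_{C\mathcal y,d}$ has a natural $(C\mathcal y,d)$-bicomodule structure, functorial (contravariantly in $q$, covariantly in $r$), and there is a natural isomorphism $$C\text{-}\mathbf{Set}[d]\big(p\otimes_{C\mathcal y,d}q,\ r\big)\cong C\text{-}\mathbf{Set}[d]\big(p,\ [q,r]_{C\mathcal y,d}\big).$$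
   Context: Small categories are comonoids in $(\mathbf{Poly},\mathcal y,\triangleleft)$; $C\mathcal y$ is the discrete category on $C$. $C\text{-}\mathbf{Set}[d]$ denotes the category of $(C\mathcal y,d)$-bicomodules (polynomials $m$ with compatible coactions $m\to C\mathcal y\triangleleft m$, $m\to m\triangleleft d$) and bicomodule maps. For such $m$ and $a\in C$, $m_a$ is the summand of $m$ over $a$, so $m\cong\sum_{a\in C}m_a$, and for each position $i$ the right coaction makes the direction set $m[i]$ (the set of elements of) a $d$-copresheaf. Each $m_a$ is thus a duc-query $X\mapsto\sum_{i\in m_a(1)}d\text{-}\mathbf{Set}(m[i],X)$; $\mathbf{Set}[d](q_a,r_a)$ is the set of natural transformations between these functors $d\text{-}\mathbf{Set}\to\mathbf{Set}$, and such a $\varphi$ sends each position $j\in q_a(1)$ to a position $\varphi(j)\in r_a(1)$ (together with a map $r[\varphi(j)]\to q[j]$ of $d$-copresheaves). *)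

theory Defs
  imports Main "HOL-Library.FuncSet"
begin

section \<open>Small categories (comonoids in Poly) presented by objects and arrows\<close>

record ('o,'m) cat =
  cob  :: "'o set"
  car  :: "'m set"
  cdom :: "'m \<Rightarrow> 'o"
  ccod :: "'m \<Rightarrow> 'o"
  cid  :: "'o \<Rightarrow> 'm"
  ccomp :: "'m \<Rightarrow> 'm \<Rightarrow> 'm"   (* ccomp d g f = g o f *)

definition small_cat :: "('o,'m) cat \<Rightarrow> bool" where
  "small_cat d \<longleftrightarrow>
     (\<forall>f\<in>car d. cdom d f \<in> cob d \<and> ccod d f \<in> cob d) \<and>
     (\<forall>x\<in>cob d. cid d x \<in> car d \<and> cdom d (cid d x) = x \<and> ccod d (cid d x) = x) \<and>
     (\<forall>f\<in>car d. \<forall>g\<in>car d. ccod d f = cdom d g \<longrightarrow>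
        ccomp d g f \<in> car d \<and> cdom d (ccomp d g f) = cdom d f \<and> ccod d (ccomp d g f) = ccod d g) \<and>
     (\<forall>f\<in>car d. ccomp d f (cid d (cdom d f)) = f \<and> ccomp d (cid d (ccod d f)) f = f) \<and>
     (\<forall>f\<in>car d. \<forall>g\<in>car d. \<forall>h\<in>car d. ccod d f = cdom d g \<longrightarrow> ccod d g = cdom d h \<longrightarrow>
        ccomp d h (ccomp d g f) = ccomp d (ccomp d h g) f)"

text \<open>A d-copresheaf is a set X of elements, each lying over an object (ob),
  with a covariant action of arrows (act f x lies over ccod f when x lies over cdom f).\<close>

definition copresheaf :: "('o,'m) cat \<Rightarrow> 'e set \<Rightarrow> ('e \<Rightarrow> 'o) \<Rightarrow> ('m \<Rightarrow> 'e \<Rightarrow> 'e) \<Rightarrow> bool" where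
  "copresheaf d X ob act \<longleftrightarrow>
     (\<forall>x\<in>X. ob x \<in> cob d) \<and>
     (\<forall>f\<in>car d. \<forall>x\<in>X. ob x = cdom d f \<longrightarrow> act f x \<in> X \<and> ob (act f x) = ccod d f) \<and>
     (\<forall>x\<in>X. act (cid d (ob x)) x = x) \<and>
     (\<forall>f\<in>car d. \<forall>g\<in>car d. \<forall>x\<in>X. ob x = cdom d f \<longrightarrow> ccod d f = cdom d g \<longrightarrow>
        act (ccomp d g f) x = act g (act f x))"

definition cmor :: "('o,'m) cat \<Rightarrow> 'e set \<Rightarrow> ('e \<Rightarrow> 'o) \<Rightarrow> ('m \<Rightarrow> 'e \<Rightarrow> 'e)
    \<Rightarrow> 'f set \<Rightarrow> ('f \<Rightarrow> 'o) \<Rightarrow> ('m \<Rightarrow> 'f \<Rightarrow> 'f) \<Rightarrow> ('e \<Rightarrow> 'f) \<Rightarrow> bool" where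
  "cmor d X obX actX Y obY actY h \<longleftrightarrow>
     h \<in> PiE X (\<lambda>_. Y) \<and>
     (\<forall>x\<in>X. obY (h x) = obX x) \<and>
     (\<forall>f\<in>car d. \<forall>x\<in>X. obX x = cdom d f \<longrightarrow> h (actX f x) = actY f (h x))"

text \<open>A (Cy,d)-bicomodule m: a set of positions bpos, each labelled (left coaction) by an
  element of C, and each position i carrying a direction set bdir i which the right coaction
  makes into (the set of elements of) a d-copresheaf.\<close>

record ('c,'i,'e,'o,'m) bicomod =
  bpos :: "'i set"
  blab :: "'i \<Rightarrow> 'c"
  bdir :: "'i \<Rightarrow> 'e set"
  bob  :: "'i \<Rightarrow> 'e \<Rightarrow> 'o"
  bact :: "'i \<Rightarrow> 'm \<Rightarrow> 'e \<Rightarrow> 'e"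

definition wf_bicomod :: "'c set \<Rightarrow> ('o,'m) cat \<Rightarrow> ('c,'i,'e,'o,'m) bicomod \<Rightarrow> bool" where
  "wf_bicomod C d m \<longleftrightarrow> blab m ` bpos m \<subseteq> C \<and>
     (\<forall>i\<in>bpos m. copresheaf d (bdir m i) (bob m i) (bact m i))"

definition bhom :: "('o,'m) cat \<Rightarrow> ('c,'i,'e,'o,'m) bicomod \<Rightarrow> ('c,'j,'f,'o,'m) bicomod
    \<Rightarrow> (('i \<Rightarrow> 'j) \<times> ('i \<Rightarrow> 'f \<Rightarrow> 'e)) set" where
  "bhom d m n = {(g,h). g \<in> PiE (bpos m) (\<lambda>_. bpos n) \<and>
      (\<forall>i\<in>bpos m. blab n (g i) = blab m i) \<and>
      h \<in> extensional (bpos m) \<and>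
      (\<forall>i\<in>bpos m. cmor d (bdir n (g i)) (bob n (g i)) (bact n (g i))
                          (bdir m i) (bob m i) (bact m i) (h i))}"

definition bid :: "('c,'i,'e,'o,'m) bicomod \<Rightarrow> ('i \<Rightarrow> 'i) \<times> ('i \<Rightarrow> 'e \<Rightarrow> 'e)" where
  "bid m = (\<lambda>i\<in>bpos m. i, \<lambda>i\<in>bpos m. \<lambda>x\<in>bdir m i. x)"

text \<open>Composition: for F : m \<rightarrow> n and G : n \<rightarrow> k, bcomp m k F G is G after F.\<close>

definition bcomp :: "('c,'i,'e,'o,'m) bicomod \<Rightarrow> ('c,'k,'g,'o,'m) bicomod
    \<Rightarrow> ('i \<Rightarrow> 'j) \<times> ('i \<Rightarrow> 'f \<Rightarrow> 'e) \<Rightarrow> ('j \<Rightarrow> 'k) \<times> ('j \<Rightarrow> 'g \<Rightarrow> 'f)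
    \<Rightarrow> ('i \<Rightarrow> 'k) \<times> ('i \<Rightarrow> 'g \<Rightarrow> 'e)" where
  "bcomp m k F G =
     (\<lambda>i\<in>bpos m. fst G (fst F i),
      \<lambda>i\<in>bpos m. \<lambda>x\<in>bdir k (fst G (fst F i)). snd F i (snd G (fst F i) x))"

definition tensor :: "('c,'i,'e,'o,'m) bicomod \<Rightarrow> ('c,'j,'f,'o,'m) bicomod
    \<Rightarrow> ('c, 'i \<times> 'j, 'e \<times> 'f, 'o, 'm) bicomod" where
  "tensor p q = \<lparr> bpos = {(i,j). i \<in> bpos p \<and> j \<in> bpos q \<and> blab p i = blab q j},
     blab = (\<lambda>(i,j). blab p i),
     bdir = (\<lambda>(i,j). {(x,y). x \<in> bdir p i \<and> y \<in> bdir q j \<and> bob p i x = bob q j y}),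
     bob = (\<lambda>(i,j) (x,y). bob p i x),
     bact = (\<lambda>(i,j) f (x,y). (bact p i f x, bact q j f y)) \<rparr>"

definition tensor_map :: "('c,'i,'e,'o,'m) bicomod \<Rightarrow> ('c,'j,'f,'o,'m) bicomod
    \<Rightarrow> ('c,'i2,'e2,'o,'m) bicomod \<Rightarrow> ('c,'j2,'f2,'o,'m) bicomod
    \<Rightarrow> ('i2 \<Rightarrow> 'i) \<times> ('i2 \<Rightarrow> 'e \<Rightarrow> 'e2) \<Rightarrow> ('j2 \<Rightarrow> 'j) \<times> ('j2 \<Rightarrow> 'f \<Rightarrow> 'f2)
    \<Rightarrow> ('i2 \<times> 'j2 \<Rightarrow> 'i \<times> 'j) \<times> ('i2 \<times> 'j2 \<Rightarrow> 'e \<times> 'f \<Rightarrow> 'e2 \<times> 'f2)" where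
  "tensor_map p q p' q' A B =
     (restrict (\<lambda>(i,j). (fst A i, fst B j)) (bpos (tensor p' q')),
      restrict (\<lambda>(i,j). restrict (\<lambda>(x,y). (snd A i x, snd B j y))
                                (bdir (tensor p q) (fst A i, fst B j)))
               (bpos (tensor p' q')))"

text \<open>Set[d](q_a, r_a): natural transformations between the duc-queries q_a and r_a,
  presented (Yoneda) by a label-preserving map on positions j \<mapsto> \<phi>(j) together with
  copresheaf maps r[\<phi>(j)] \<rightarrow> q[j].\<close>

definition qrmaps :: "('o,'m) cat \<Rightarrow> ('c,'j,'f,'o,'m) bicomod \<Rightarrow> ('c,'k,'g,'o,'m) bicomod
    \<Rightarrow> 'c \<Rightarrow> (('j \<Rightarrow> 'k) \<times> ('j \<Rightarrow> 'g \<Rightarrow> 'f)) set" where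
  "qrmaps d q r a = {(g,h).
      g \<in> PiE {j \<in> bpos q. blab q j = a} (\<lambda>_. {k \<in> bpos r. blab r k = a}) \<and>
      h \<in> extensional {j \<in> bpos q. blab q j = a} \<and>
      (\<forall>j\<in>{j \<in> bpos q. blab q j = a}.
         cmor d (bdir r (g j)) (bob r (g j)) (bact r (g j)) (bdir q j) (bob q j) (bact q j) (h j))}"

definition ihom :: "'c set \<Rightarrow> ('o,'m) cat \<Rightarrow> ('c,'j,'f,'o,'m) bicomod \<Rightarrow> ('c,'k,'g,'o,'m) bicomod
    \<Rightarrow> ('c, 'c \<times> (('j \<Rightarrow> 'k) \<times> ('j \<Rightarrow> 'g \<Rightarrow> 'f)), 'j \<times> 'g, 'o, 'm) bicomod" where
  "ihom C d q r = \<lparr> bpos = {(a,\<phi>). a \<in> C \<and> \<phi> \<in> qrmaps d q r a},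
     blab = fst,
     bdir = (\<lambda>(a,(g,h)). {(j,y). j \<in> bpos q \<and> blab q j = a \<and> y \<in> bdir r (g j)}),
     bob = (\<lambda>(a,(g,h)) (j,y). bob r (g j) y),
     bact = (\<lambda>(a,(g,h)) f (j,y). (j, bact r (g j) f y)) \<rparr>"

definition ihom_map :: "'c set \<Rightarrow> ('o,'m) cat
    \<Rightarrow> ('c,'j,'f,'o,'m) bicomod \<Rightarrow> ('c,'k,'g,'o,'m) bicomod
    \<Rightarrow> ('c,'j2,'f2,'o,'m) bicomod \<Rightarrow> ('c,'k2,'g2,'o,'m) bicomod
    \<Rightarrow> ('j2 \<Rightarrow> 'j) \<times> ('j2 \<Rightarrow> 'f \<Rightarrow> 'f2) \<Rightarrow> ('k \<Rightarrow> 'k2) \<times> ('k \<Rightarrow> 'g2 \<Rightarrow> 'g)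
    \<Rightarrow> ('c \<times> (('j \<Rightarrow> 'k) \<times> ('j \<Rightarrow> 'g \<Rightarrow> 'f)) \<Rightarrow> 'c \<times> (('j2 \<Rightarrow> 'k2) \<times> ('j2 \<Rightarrow> 'g2 \<Rightarrow> 'f2)))
       \<times> ('c \<times> (('j \<Rightarrow> 'k) \<times> ('j \<Rightarrow> 'g \<Rightarrow> 'f)) \<Rightarrow> 'j2 \<times> 'g2 \<Rightarrow> 'j \<times> 'g)" where
  "ihom_map C d q r q' r' A B =
     (let P = (\<lambda>(a,(g,h)).
                (a, (\<lambda>j\<in>{j \<in> bpos q'. blab q' j = a}. fst B (g (fst A j)),
                     \<lambda>j\<in>{j \<in> bpos q'. blab q' j = a}.
                        \<lambda>y\<in>bdir r' (fst B (g (fst A j))).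
                          snd A j (h (fst A j) (snd B (g (fst A j)) y)))))
      in (restrict P (bpos (ihom C d q r)),
          restrict (\<lambda>(a,(g,h)). restrict (\<lambda>(j,y). (fst A j, snd B (g (fst A j)) y))
                                         (bdir (ihom C d q' r') (P (a,(g,h)))))
                   (bpos (ihom C d q r))))"

definition curry_map :: "'c set \<Rightarrow> ('o,'m) cat
    \<Rightarrow> ('c,'i,'e,'o,'m) bicomod \<Rightarrow> ('c,'j,'f,'o,'m) bicomod \<Rightarrow> ('c,'k,'g,'o,'m) bicomod
    \<Rightarrow> ('i \<times> 'j \<Rightarrow> 'k) \<times> ('i \<times> 'j \<Rightarrow> 'g \<Rightarrow> 'e \<times> 'f)
    \<Rightarrow> ('i \<Rightarrow> 'c \<times> (('j \<Rightarrow> 'k) \<times> ('j \<Rightarrow> 'g \<Rightarrow> 'f))) \<times> ('i \<Rightarrow> 'j \<times> 'g \<Rightarrow> 'e)" where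
  "curry_map C d p q r F =
     (\<lambda>i\<in>bpos p. (blab p i,
         (\<lambda>j\<in>{j \<in> bpos q. blab q j = blab p i}. fst F (i,j),
          \<lambda>j\<in>{j \<in> bpos q. blab q j = blab p i}. \<lambda>y\<in>bdir r (fst F (i,j)). snd (snd F (i,j) y))),
      \<lambda>i\<in>bpos p. restrict (\<lambda>(j,y). fst (snd F (i,j) y))
                   {(j,y). j \<in> bpos q \<and> blab q j = blab p i \<and> y \<in> bdir r (fst F (i,j))})"

end

theory Submission
  imports Defs
begin


lemma cmorD:
  assumes "cmor d X oX aX Y oY aY h"
  shows "\<And>x. x\<in>X \<Longrightarrow> h x \<in> Y" "\<And>x. x\<in>X \<Longrightarrow> oY (h x) = oX x"
    "\<And>f x. f\<in>car d \<Longrightarrow> x\<in>X \<Longrightarrow> oX x = cdom d f \<Longrightarrow> h (aX f x) = aY f (h x)"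
    "\<And>x. x\<notin>X \<Longrightarrow> h x = undefined"
  using assms unfolding cmor_def by (auto simp: PiE_def extensional_def)

lemma cmor_comp:
  assumes "cmor d X oX aX Y oY aY h1" "cmor d Y oY aY Z oZ aZ h2" "copresheaf d X oX aX"
  shows "cmor d X oX aX Z oZ aZ (\<lambda>x\<in>X. h2 (h1 x))"
  using assms unfolding cmor_def copresheaf_def by (auto simp: PiE_def Pi_def)

lemma cmor_restrict_eq: "cmor d X oX aX Y oY aY h \<Longrightarrow> restrict h X = h"
  unfolding cmor_def by (auto simp: PiE_def extensional_restrict)

lemma wf_tensor:
  assumes "wf_bicomod C d p" "wf_bicomod C d q"
  shows "wf_bicomod C d (tensor p q)"
  using assms unfolding wf_bicomod_def tensor_def copresheaf_def
  by (auto simp: image_subset_iff) (metis+)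

lemma wf_ihom:
  assumes "wf_bicomod C d q" "wf_bicomod C d r"
  shows "wf_bicomod C d (ihom C d q r)"
  using assms unfolding wf_bicomod_def ihom_def copresheaf_def qrmaps_def
  by (auto simp: image_subset_iff PiE_def Pi_def) 

lemma cmor_comp3:
  assumes "cmor d X oX aX Y oY aY h1" "cmor d Y oY aY Z oZ aZ h2" "cmor d Z oZ aZ W oW aW h3"
    "copresheaf d X oX aX"
  shows "cmor d X oX aX W oW aW (\<lambda>x\<in>X. h3 (h2 (h1 x)))"
proof -
  have "cmor d X oX aX W oW aW (\<lambda>x\<in>X. h3 ((\<lambda>x\<in>X. h2 (h1 x)) x))"
    by (rule cmor_comp[OF cmor_comp[OF assms(1,2,4)] assms(3,4)])
  moreover have "(\<lambda>x\<in>X. h3 ((\<lambda>x\<in>X. h2 (h1 x)) x)) = (\<lambda>x\<in>X. h3 (h2 (h1 x)))"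
    by (auto simp: fun_eq_iff)
  ultimately show ?thesis by simp
qed

lemma bhomI:
  assumes "g \<in> PiE (bpos m) (\<lambda>_. bpos n)" "\<And>i. i\<in>bpos m \<Longrightarrow> blab n (g i) = blab m i"
    "h \<in> extensional (bpos m)"
    "\<And>i. i\<in>bpos m \<Longrightarrow> cmor d (bdir n (g i)) (bob n (g i)) (bact n (g i)) (bdir m i) (bob m i) (bact m i) (h i)"
  shows "(g,h) \<in> bhom d m n"
  using assms unfolding bhom_def by auto

lemma bhomD:
  assumes "(g,h) \<in> bhom d m n"
  shows "\<And>i. i\<in>bpos m \<Longrightarrow> g i \<in> bpos n" "\<And>i. i\<in>bpos m \<Longrightarrow> blab n (g i) = blab m i"
    "\<And>i. i\<notin>bpos m \<Longrightarrow> g i = undefined" "\<And>i. i\<notin>bpos m \<Longrightarrow> h i = undefined"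
    "\<And>i. i\<in>bpos m \<Longrightarrow> cmor d (bdir n (g i)) (bob n (g i)) (bact n (g i)) (bdir m i) (bob m i) (bact m i) (h i)"
    "g \<in> PiE (bpos m) (\<lambda>_. bpos n)" "h \<in> extensional (bpos m)"
  using assms unfolding bhom_def by (auto simp: PiE_def extensional_def)

lemma qrmapsI:
  assumes "\<And>j. j\<in>bpos q \<Longrightarrow> blab q j = a \<Longrightarrow> g j \<in> bpos r \<and> blab r (g j) = a"
    "g \<in> extensional {j \<in> bpos q. blab q j = a}"
    "h \<in> extensional {j \<in> bpos q. blab q j = a}"
    "\<And>j. j\<in>bpos q \<Longrightarrow> blab q j = a \<Longrightarrow> cmor d (bdir r (g j)) (bob r (g j)) (bact r (g j)) (bdir q j) (bob q j) (bact q j) (h j)"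
  shows "(g,h) \<in> qrmaps d q r a"
  using assms unfolding qrmaps_def by (auto simp: PiE_def Pi_def)

lemma qrmapsD:
  assumes "(g,h) \<in> qrmaps d q r a"
  shows "\<And>j. j\<in>bpos q \<Longrightarrow> blab q j = a \<Longrightarrow> g j \<in> bpos r"
    "\<And>j. j\<in>bpos q \<Longrightarrow> blab q j = a \<Longrightarrow> blab r (g j) = a"
    "g \<in> extensional {j \<in> bpos q. blab q j = a}"
    "h \<in> extensional {j \<in> bpos q. blab q j = a}"
    "\<And>j. j\<in>bpos q \<Longrightarrow> blab q j = a \<Longrightarrow> cmor d (bdir r (g j)) (bob r (g j)) (bact r (g j)) (bdir q j) (bob q j) (bact q j) (h j)"
  using assms unfolding qrmaps_def by (auto simp: PiE_def)

lemma ihom_pos: "(a,(g,h)) \<in> bpos (ihom C d q r) \<longleftrightarrow> a \<in> C \<and> (g,h) \<in> qrmaps d q r a"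
  by (simp add: ihom_def)

lemma ihom_simps:
  "blab (ihom C d q r) x = fst x"
  "bdir (ihom C d q r) (a,(g,h)) = {(j,y). j \<in> bpos q \<and> blab q j = a \<and> y \<in> bdir r (g j)}"
  "bob (ihom C d q r) (a,(g,h)) = (\<lambda>(j,y). bob r (g j) y)"
  "bact (ihom C d q r) (a,(g,h)) = (\<lambda>f (j,y). (j, bact r (g j) f y))"
  by (auto simp: ihom_def)

lemma ihom_map_fst:
  "(a,(g,h)) \<in> bpos (ihom C d q r) \<Longrightarrow> fst (ihom_map C d q r q' r' A B) (a,(g,h)) =
     (a, (\<lambda>j\<in>{j \<in> bpos q'. blab q' j = a}. fst B (g (fst A j)),
          \<lambda>j\<in>{j \<in> bpos q'. blab q' j = a}.
            \<lambda>y\<in>bdir r' (fst B (g (fst A j))). snd A j (h (fst A j) (snd B (g (fst A j)) y))))"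
  by (simp add: ihom_map_def Let_def)

lemma ihom_map_fst_out:
  "x \<notin> bpos (ihom C d q r) \<Longrightarrow> fst (ihom_map C d q r q' r' A B) x = undefined"
  "x \<notin> bpos (ihom C d q r) \<Longrightarrow> snd (ihom_map C d q r q' r' A B) x = undefined"
  by (simp_all add: ihom_map_def Let_def)

lemma ihom_map_snd:
  "(a,(g,h)) \<in> bpos (ihom C d q r) \<Longrightarrow> snd (ihom_map C d q r q' r' A B) (a,(g,h)) =
     restrict (\<lambda>(j,y). (fst A j, snd B (g (fst A j)) y))
       (bdir (ihom C d q' r') (fst (ihom_map C d q r q' r' A B) (a,(g,h))))"
  by (simp add: ihom_map_def Let_def)

lemma ihom_map_pos_in:
  assumes wf: "wf_bicomod C d q'" "wf_bicomod C d r'"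
    and A: "(a1,a2) \<in> bhom d q' q" and B: "(b1,b2) \<in> bhom d r r'"
    and P: "(a,(g,h)) \<in> bpos (ihom C d q r)"
  shows "fst (ihom_map C d q r q' r' (a1,a2) (b1,b2)) (a,(g,h)) \<in> bpos (ihom C d q' r')"
proof -
  from P have aC: "a \<in> C" and gh: "(g,h) \<in> qrmaps d q r a" by (auto simp: ihom_pos)
  note AD = bhomD[OF A] and BD = bhomD[OF B] and GD = qrmapsD[OF gh]
  have "(\<lambda>j\<in>{j \<in> bpos q'. blab q' j = a}. b1 (g (a1 j)),
          \<lambda>j\<in>{j \<in> bpos q'. blab q' j = a}.
            \<lambda>y\<in>bdir r' (b1 (g (a1 j))). a2 j (h (a1 j) (b2 (g (a1 j)) y))) \<in> qrmaps d q' r' a"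
  proof (rule qrmapsI)
    fix j assume j: "j \<in> bpos q'" "blab q' j = a"
    have aj: "a1 j \<in> bpos q" "blab q (a1 j) = a" using AD j by auto
    have gj: "g (a1 j) \<in> bpos r" "blab r (g (a1 j)) = a" using GD aj by auto
    show "(\<lambda>j\<in>{j \<in> bpos q'. blab q' j = a}. b1 (g (a1 j))) j \<in> bpos r' \<and>
          blab r' ((\<lambda>j\<in>{j \<in> bpos q'. blab q' j = a}. b1 (g (a1 j))) j) = a"
      using BD gj j by auto
    have cp: "copresheaf d (bdir r' (b1 (g (a1 j)))) (bob r' (b1 (g (a1 j)))) (bact r' (b1 (g (a1 j))))"
      using wf(2) BD gj unfolding wf_bicomod_def by auto
    show "cmor d (bdir r' ((\<lambda>j\<in>{j \<in> bpos q'. blab q' j = a}. b1 (g (a1 j))) j))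
          (bob r' ((\<lambda>j\<in>{j \<in> bpos q'. blab q' j = a}. b1 (g (a1 j))) j))
          (bact r' ((\<lambda>j\<in>{j \<in> bpos q'. blab q' j = a}. b1 (g (a1 j))) j)) (bdir q' j) (bob q' j)
          (bact q' j)
          ((\<lambda>j\<in>{j \<in> bpos q'. blab q' j = a}.
               \<lambda>y\<in>bdir r' (b1 (g (a1 j))). a2 j (h (a1 j) (b2 (g (a1 j)) y))) j)"
      using cmor_comp3[OF BD(5)[OF gj(1)] GD(5)[OF aj] AD(5)[OF j(1)] cp] j by simp
  qed auto
  then show ?thesis using aC P by (simp add: ihom_map_fst ihom_pos)
qed

lemma ihom_map_bhom:
  assumes wf: "wf_bicomod C d q'" "wf_bicomod C d r'"
    and A: "A \<in> bhom d q' q" and B: "B \<in> bhom d r r'"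
  shows "ihom_map C d q r q' r' A B \<in> bhom d (ihom C d q r) (ihom C d q' r')"
proof -
  obtain a1 a2 where Ae: "A = (a1,a2)" by (cases A)
  obtain b1 b2 where Be: "B = (b1,b2)" by (cases B)
  note A' = A[unfolded Ae] and B' = B[unfolded Be]
  note AD = bhomD[OF A'] and BD = bhomD[OF B']
  let ?M = "ihom_map C d q r q' r' (a1,a2) (b1,b2)"
  have PI: "fst ?M x \<in> bpos (ihom C d q' r')" if "x \<in> bpos (ihom C d q r)" for x
    using that ihom_map_pos_in[OF wf A' B'] by (cases x) auto
  have "(fst ?M, snd ?M) \<in> bhom d (ihom C d q r) (ihom C d q' r')"
  proof (rule bhomI)
    show "fst ?M \<in> bpos (ihom C d q r) \<rightarrow>\<^sub>E bpos (ihom C d q' r')"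
      using PI ihom_map_fst_out by (auto simp: PiE_def extensional_def)
    show "snd ?M \<in> extensional (bpos (ihom C d q r))"
      using ihom_map_fst_out by (auto simp: extensional_def)
    fix x assume x: "x \<in> bpos (ihom C d q r)"
    obtain a g h where xe: "x = (a,(g,h))" by (cases x) auto
    show "blab (ihom C d q' r') (fst ?M x) = blab (ihom C d q r) x"
      using x by (simp add: xe ihom_map_fst ihom_simps)
    from x have gh: "(g,h) \<in> qrmaps d q r a" by (auto simp: xe ihom_pos)
    note GD = qrmapsD[OF gh]
    define g' where "g' = (\<lambda>j\<in>{j \<in> bpos q'. blab q' j = a}. b1 (g (a1 j)))"
    define h' where "h' = (\<lambda>j\<in>{j \<in> bpos q'. blab q' j = a}.
            \<lambda>y\<in>bdir r' (b1 (g (a1 j))). a2 j (h (a1 j) (b2 (g (a1 j)) y)))"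
    have Mx: "fst ?M x = (a,(g',h'))" using x by (simp add: xe ihom_map_fst g'_def h'_def)
    have Sx: "snd ?M x = restrict (\<lambda>(j,y). (a1 j, b2 (g (a1 j)) y)) (bdir (ihom C d q' r') (a,(g',h')))"
      using x Mx by (simp add: xe ihom_map_snd)
    show "cmor d (bdir (ihom C d q' r') (fst ?M x)) (bob (ihom C d q' r') (fst ?M x))
          (bact (ihom C d q' r') (fst ?M x)) (bdir (ihom C d q r) x) (bob (ihom C d q r) x)
          (bact (ihom C d q r) x) (snd ?M x)"
      unfolding Mx Sx unfolding xe cmor_def ihom_simps
    proof (intro conjI ballI impI)
      show "restrict (\<lambda>(j, y). (a1 j, b2 (g (a1 j)) y)) {(j, y). j \<in> bpos q' \<and> blab q' j = a \<and> y \<in> bdir r' (g' j)} \<in> {(j, y). j \<in> bpos q' \<and> blab q' j = a \<and> y \<in> bdir r' (g' j)} \<rightarrow>\<^sub>E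
             {(j, y). j \<in> bpos q \<and> blab q j = a \<and> y \<in> bdir r (g j)}"
      proof -
        have "(a1 j, b2 (g (a1 j)) y) \<in> {(j, y). j \<in> bpos q \<and> blab q j = a \<and> y \<in> bdir r (g j)}"
          if "j \<in> bpos q'" "blab q' j = a" "y \<in> bdir r' (g' j)" for j y
        proof -
          have aj: "a1 j \<in> bpos q" "blab q (a1 j) = a" using AD that by auto
          have gj: "g (a1 j) \<in> bpos r" using GD aj by auto
          show ?thesis using aj cmorD(1)[OF BD(5)[OF gj]] that by (auto simp: g'_def)
        qed
        then show ?thesis by (auto simp: PiE_def Pi_def)
      qed
    next
      fix z assume z: "z \<in> {(j, y). j \<in> bpos q' \<and> blab q' j = a \<and> y \<in> bdir r' (g' j)}"
      then obtain j y where ze: "z = (j,y)" and j: "j \<in> bpos q'" "blab q' j = a" and y: "y \<in> bdir r' (g' j)" by auto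
      have aj: "a1 j \<in> bpos q" "blab q (a1 j) = a" using AD j by auto
      have gj: "g (a1 j) \<in> bpos r" using GD aj by auto
      note BC = cmorD[OF BD(5)[OF gj]]
      have y': "y \<in> bdir r' (b1 (g (a1 j)))" using y j by (simp add: g'_def)
      show "(case restrict (\<lambda>(j, y). (a1 j, b2 (g (a1 j)) y))
              {(j, y). j \<in> bpos q' \<and> blab q' j = a \<and> y \<in> bdir r' (g' j)} z of
          (j, y) \<Rightarrow> bob r (g j) y) = (case z of (j, y) \<Rightarrow> bob r' (g' j) y)"
        using z BC(2)[OF y'] j by (simp add: ze g'_def)
      fix f assume f: "f \<in> car d" and ob: "(case z of (j, y) \<Rightarrow> bob r' (g' j) y) = cdom d f"
      have cpr': "copresheaf d (bdir r' (b1 (g (a1 j)))) (bob r' (b1 (g (a1 j)))) (bact r' (b1 (g (a1 j))))"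
        using wf(2) BD gj unfolding wf_bicomod_def by auto
      have ob': "bob r' (b1 (g (a1 j))) y = cdom d f" using ob j by (simp add: ze g'_def)
      have act_in: "bact r' (b1 (g (a1 j))) f y \<in> bdir r' (b1 (g (a1 j)))"
        using cpr' f y' ob' unfolding copresheaf_def by auto
      show "restrict (\<lambda>(j, y). (a1 j, b2 (g (a1 j)) y))
           {(j, y). j \<in> bpos q' \<and> blab q' j = a \<and> y \<in> bdir r' (g' j)}
           (case z of (j, y) \<Rightarrow> (j, bact r' (g' j) f y)) =
          (case restrict (\<lambda>(j, y). (a1 j, b2 (g (a1 j)) y))
                 {(j, y). j \<in> bpos q' \<and> blab q' j = a \<and> y \<in> bdir r' (g' j)} z of
           (j, y) \<Rightarrow> (j, bact r (g j) f y))"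
        using j y' act_in BC(3)[OF f y' ob'] by (simp add: ze g'_def)
    qed
  qed
  then show ?thesis by (simp add: Ae Be)
qed

lemma bid_simps: "fst (bid m) = (\<lambda>i\<in>bpos m. i)" "snd (bid m) = (\<lambda>i\<in>bpos m. \<lambda>x\<in>bdir m i. x)"
  by (simp_all add: bid_def)

lemma ihom_map_id_fst:
  assumes x: "(a,(g,h)) \<in> bpos (ihom C d q r)"
  shows "fst (ihom_map C d q r q r (bid q) (bid r)) (a,(g,h)) = (a,(g,h))"
proof -
  from x have gh: "(g,h) \<in> qrmaps d q r a" by (auto simp: ihom_pos)
  note GD = qrmapsD[OF gh]
  have "(\<lambda>j\<in>{j \<in> bpos q. blab q j = a}. fst (bid r) (g (fst (bid q) j))) = g"
    using GD(1,3) by (auto simp: fun_eq_iff bid_simps extensional_def)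
  moreover have "(\<lambda>j\<in>{j \<in> bpos q. blab q j = a}.
            \<lambda>y\<in>bdir r (fst (bid r) (g (fst (bid q) j))). snd (bid q) j (h (fst (bid q) j) (snd (bid r) (g (fst (bid q) j)) y))) = h"
  proof (rule ext)
    fix j show "(\<lambda>j\<in>{j \<in> bpos q. blab q j = a}.
            \<lambda>y\<in>bdir r (fst (bid r) (g (fst (bid q) j))). snd (bid q) j (h (fst (bid q) j) (snd (bid r) (g (fst (bid q) j)) y))) j = h j"
    proof (cases "j \<in> bpos q \<and> blab q j = a")
      case True
      note C = cmorD[OF GD(5)] 
      show ?thesis using True GD(1) C[of j] by (auto simp: fun_eq_iff bid_simps)
    next
      case False then show ?thesis using GD(4) by (auto simp: extensional_def)
    qed
  qed
  ultimately show ?thesis using x by (simp add: ihom_map_fst)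
qed

lemma ihom_map_id:
  shows "ihom_map C d q r q r (bid q) (bid r) = bid (ihom C d q r)"
proof -
  have F: "fst (ihom_map C d q r q r (bid q) (bid r)) = fst (bid (ihom C d q r))"
  proof (rule ext)
    fix x show "fst (ihom_map C d q r q r (bid q) (bid r)) x = fst (bid (ihom C d q r)) x"
    proof (cases "x \<in> bpos (ihom C d q r)")
      case False then show ?thesis using ihom_map_fst_out(1)[of x C d q r q r "bid q" "bid r"] by (simp add: bid_simps)
    next
      case True
      then obtain a g h where xe: "x = (a,(g,h))" by (cases x) auto
      show ?thesis using True ihom_map_id_fst[of a g h C d q r] unfolding xe by (simp add: bid_simps)
    qed
  qed
  have S: "snd (ihom_map C d q r q r (bid q) (bid r)) = snd (bid (ihom C d q r))"
  proof (rule ext)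
    fix x show "snd (ihom_map C d q r q r (bid q) (bid r)) x = snd (bid (ihom C d q r)) x"
    proof (cases "x \<in> bpos (ihom C d q r)")
      case False then show ?thesis using ihom_map_fst_out(2)[of x C d q r q r "bid q" "bid r"] by (simp add: bid_simps)
    next
      case True
      then obtain a g h where xe: "x = (a,(g,h))" by (cases x) auto
      from True have gh: "(g,h) \<in> qrmaps d q r a" by (auto simp: ihom_pos xe)
      note GD = qrmapsD[OF gh]
      show ?thesis using True GD(1) unfolding xe
        by (auto simp: ihom_map_snd ihom_map_id_fst bid_simps ihom_simps fun_eq_iff)
    qed
  qed
  show ?thesis using F S by (simp add: prod_eq_iff)
qed

lemma bcomp_simps:
  "fst (bcomp m k F G) = (\<lambda>i\<in>bpos m. fst G (fst F i))"
  "snd (bcomp m k F G) = (\<lambda>i\<in>bpos m. \<lambda>x\<in>bdir k (fst G (fst F i)). snd F i (snd G (fst F i) x))"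
  by (simp_all add: bcomp_def)

lemma ihom_map_comp:
  assumes wf: "wf_bicomod C d q'" "wf_bicomod C d r'" "wf_bicomod C d q''" "wf_bicomod C d r''"
    and A: "A \<in> bhom d q' q" and A': "A' \<in> bhom d q'' q'"
    and B: "B \<in> bhom d r r'" and B': "B' \<in> bhom d r' r''"
  shows "ihom_map C d q r q'' r'' (bcomp q'' q A' A) (bcomp r r'' B B')
          = bcomp (ihom C d q r) (ihom C d q'' r'')
              (ihom_map C d q r q' r' A B) (ihom_map C d q' r' q'' r'' A' B')"
proof -
  obtain a1 a2 where Ae: "A = (a1,a2)" by (cases A)
  obtain b1 b2 where Be: "B = (b1,b2)" by (cases B)
  obtain c1 c2 where A'e: "A' = (c1,c2)" by (cases A')
  obtain e1 e2 where B'e: "B' = (e1,e2)" by (cases B')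
  note AD = bhomD[OF A[unfolded Ae]] and BD = bhomD[OF B[unfolded Be]]
  note CD = bhomD[OF A'[unfolded A'e]] and ED = bhomD[OF B'[unfolded B'e]]
  let ?L = "ihom_map C d q r q'' r'' (bcomp q'' q A' A) (bcomp r r'' B B')"
  let ?F = "ihom_map C d q r q' r' A B"
  let ?G = "ihom_map C d q' r' q'' r'' A' B'"
  have key: "fst ?L x = fst ?G (fst ?F x) \<and>
     snd ?L x = (\<lambda>z\<in>bdir (ihom C d q'' r'') (fst ?G (fst ?F x)). snd ?F x (snd ?G (fst ?F x) z))"
    if x: "x \<in> bpos (ihom C d q r)" for x
  proof -
    obtain a g h where xe: "x = (a,(g,h))" using x by (cases x) auto
    from x have gh: "(g,h) \<in> qrmaps d q r a" by (auto simp: ihom_pos xe)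
    note GD = qrmapsD[OF gh]
    define g1 where "g1 = (\<lambda>j\<in>{j \<in> bpos q'. blab q' j = a}. b1 (g (a1 j)))"
    define h1 where "h1 = (\<lambda>j\<in>{j \<in> bpos q'. blab q' j = a}.
            \<lambda>y\<in>bdir r' (b1 (g (a1 j))). a2 j (h (a1 j) (b2 (g (a1 j)) y)))"
    have Fx: "fst ?F x = (a,(g1,h1))" using x by (simp add: xe ihom_map_fst g1_def h1_def Ae Be)
    have Fin: "(a,(g1,h1)) \<in> bpos (ihom C d q' r')"
      using ihom_map_pos_in[OF wf(1,2) A[unfolded Ae] B[unfolded Be] x[unfolded xe]] Fx
      by (simp add: xe Ae Be)
    define g2 where "g2 = (\<lambda>j\<in>{j \<in> bpos q''. blab q'' j = a}. e1 (g1 (c1 j)))"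
    define h2 where "h2 = (\<lambda>j\<in>{j \<in> bpos q''. blab q'' j = a}.
            \<lambda>y\<in>bdir r'' (e1 (g1 (c1 j))). c2 j (h1 (c1 j) (e2 (g1 (c1 j)) y)))"
    have Gx: "fst ?G (a,(g1,h1)) = (a,(g2,h2))" using Fin by (simp add: ihom_map_fst g2_def h2_def A'e B'e)
    have jfacts: "c1 j \<in> bpos q'" "blab q' (c1 j) = a" "a1 (c1 j) \<in> bpos q" "blab q (a1 (c1 j)) = a"
      "g (a1 (c1 j)) \<in> bpos r" "g1 (c1 j) = b1 (g (a1 (c1 j)))"
      if "j \<in> bpos q''" "blab q'' j = a" for j
      using that CD(1,2)[of j] AD(1,2)[of "c1 j"] GD(1)[of "a1 (c1 j)"] by (auto simp: g1_def)
    have Lfst: "fst ?L x = (a,(g2,h2))"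
    proof -
      have "(\<lambda>j\<in>{j \<in> bpos q''. blab q'' j = a}. fst (bcomp r r'' B B') (g (fst (bcomp q'' q A' A) j))) = g2"
        using jfacts by (auto simp: fun_eq_iff g2_def bcomp_simps Ae Be A'e B'e)
      moreover have "(\<lambda>j\<in>{j \<in> bpos q''. blab q'' j = a}.
            \<lambda>y\<in>bdir r'' (fst (bcomp r r'' B B') (g (fst (bcomp q'' q A' A) j))).
               snd (bcomp q'' q A' A) j (h (fst (bcomp q'' q A' A) j) (snd (bcomp r r'' B B') (g (fst (bcomp q'' q A' A) j)) y))) = h2"
      proof (rule ext)+
        fix j y
        show "(\<lambda>j\<in>{j \<in> bpos q''. blab q'' j = a}.
            \<lambda>y\<in>bdir r'' (fst (bcomp r r'' B B') (g (fst (bcomp q'' q A' A) j))).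
               snd (bcomp q'' q A' A) j (h (fst (bcomp q'' q A' A) j) (snd (bcomp r r'' B B') (g (fst (bcomp q'' q A' A) j)) y))) j y = h2 j y"
        proof (cases "j \<in> bpos q'' \<and> blab q'' j = a \<and> y \<in> bdir r'' (e1 (b1 (g (a1 (c1 j)))))")
          case True
          note jf = jfacts[OF conjunct1[OF True] conjunct1[OF conjunct2[OF True]]]
          have y: "y \<in> bdir r'' (e1 (b1 (g (a1 (c1 j)))))" using True by simp
          have gb: "b1 (g (a1 (c1 j))) \<in> bpos r'" using BD(1) jf by auto
          have y1: "e2 (b1 (g (a1 (c1 j)))) y \<in> bdir r' (b1 (g (a1 (c1 j))))"
            using cmorD(1)[OF ED(5)[OF gb] y] .
          have y2: "b2 (g (a1 (c1 j))) (e2 (b1 (g (a1 (c1 j)))) y) \<in> bdir r (g (a1 (c1 j)))"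
            using cmorD(1)[OF BD(5)[OF jf(5)] y1] .
          have y3: "h (a1 (c1 j)) (b2 (g (a1 (c1 j))) (e2 (b1 (g (a1 (c1 j)))) y)) \<in> bdir q (a1 (c1 j))"
            using cmorD(1)[OF GD(5)[OF jf(3,4)] y2] .
          show ?thesis using True jf y1 y2 y3 by (simp add: h2_def h1_def bcomp_simps Ae Be A'e B'e)
        next
          case False
          then show ?thesis using jfacts by (auto simp: h2_def bcomp_simps Ae Be A'e B'e)
        qed
      qed
      ultimately show ?thesis using x by (simp add: xe ihom_map_fst)
    qed
    have Lsnd: "snd ?L x = (\<lambda>z\<in>bdir (ihom C d q'' r'') (a,(g2,h2)). snd ?F x (snd ?G (a,(g1,h1)) z))"
    proof (rule ext)
      fix z
      show "snd ?L x z = (\<lambda>z\<in>bdir (ihom C d q'' r'') (a,(g2,h2)). snd ?F x (snd ?G (a,(g1,h1)) z)) z"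
      proof (cases "z \<in> bdir (ihom C d q'' r'') (a,(g2,h2))")
        case True
        then obtain j y where ze: "z = (j,y)" and j: "j \<in> bpos q''" "blab q'' j = a"
          and y: "y \<in> bdir r'' (g2 j)" by (auto simp: ihom_simps)
        note jf = jfacts[OF j]
        have y': "y \<in> bdir r'' (e1 (b1 (g (a1 (c1 j)))))" using y j jf by (simp add: g2_def)
        have gb: "b1 (g (a1 (c1 j))) \<in> bpos r'" using BD(1) jf by auto
        have y1: "e2 (b1 (g (a1 (c1 j)))) y \<in> bdir r' (b1 (g (a1 (c1 j))))"
          using cmorD(1)[OF ED(5)[OF gb] y'] .
        show ?thesis using True x Fin Lfst Fx Gx j jf y' y1 unfolding ze
          by (simp add: xe ihom_map_snd ihom_simps bcomp_simps Ae Be A'e B'e g1_def g2_def)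
      next
        case False
        then show ?thesis using x Lfst by (simp add: xe ihom_map_snd)
      qed
    qed
    show ?thesis using Lfst Lsnd Fx Gx by simp
  qed
  have "fst ?L x = fst (bcomp (ihom C d q r) (ihom C d q'' r'') ?F ?G) x \<and>
        snd ?L x = snd (bcomp (ihom C d q r) (ihom C d q'' r'') ?F ?G) x" for x
  proof (cases "x \<in> bpos (ihom C d q r)")
    case True then show ?thesis using key[OF True] by (simp add: bcomp_simps)
  next
    case False then show ?thesis
      using ihom_map_fst_out[OF False, of q'' r'' "bcomp q'' q A' A" "bcomp r r'' B B'"]
      by (simp add: bcomp_simps)
  qed
  then show ?thesis by (simp add: prod_eq_iff fun_eq_iff)
qed



lemma tensor_simps:
  "bpos (tensor p q) = {(i,j). i \<in> bpos p \<and> j \<in> bpos q \<and> blab p i = blab q j}"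
  "blab (tensor p q) (i,j) = blab p i"
  "bdir (tensor p q) (i,j) = {(x,y). x \<in> bdir p i \<and> y \<in> bdir q j \<and> bob p i x = bob q j y}"
  "bob (tensor p q) (i,j) = (\<lambda>(x,y). bob p i x)"
  "bact (tensor p q) (i,j) = (\<lambda>f (x,y). (bact p i f x, bact q j f y))"
  by (auto simp: tensor_def)

lemma cmor_tensor_proj:
  assumes "cmor d Y oY aY (bdir (tensor p q) (i,j)) (bob (tensor p q) (i,j)) (bact (tensor p q) (i,j)) k"
    and cpY: "copresheaf d Y oY aY"
  shows "cmor d Y oY aY (bdir p i) (bob p i) (bact p i) (\<lambda>y\<in>Y. fst (k y))"
    "cmor d Y oY aY (bdir q j) (bob q j) (bact q j) (\<lambda>y\<in>Y. snd (k y))"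
proof -
  note D = cmorD[OF assms(1), unfolded tensor_simps]
  have k: "\<And>y. y \<in> Y \<Longrightarrow> fst (k y) \<in> bdir p i \<and> snd (k y) \<in> bdir q j \<and> bob p i (fst (k y)) = bob q j (snd (k y))"
    "\<And>y. y \<in> Y \<Longrightarrow> bob p i (fst (k y)) = oY y"
    "\<And>f y. f \<in> car d \<Longrightarrow> y \<in> Y \<Longrightarrow> oY y = cdom d f \<Longrightarrow> k (aY f y) = (bact p i f (fst (k y)), bact q j f (snd (k y)))"
    using D(1) D(2) D(3) by (simp_all add: case_prod_beta)
  have cp: "aY f y \<in> Y" if "f \<in> car d" "y \<in> Y" "oY y = cdom d f" for f y
    using cpY that unfolding copresheaf_def by auto
  show "cmor d Y oY aY (bdir p i) (bob p i) (bact p i) (\<lambda>y\<in>Y. fst (k y))"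
    "cmor d Y oY aY (bdir q j) (bob q j) (bact q j) (\<lambda>y\<in>Y. snd (k y))"
    unfolding cmor_def using k cp by (auto simp: PiE_def Pi_def)
qed

lemma curry_fst:
  "i \<in> bpos p \<Longrightarrow> fst (curry_map C d p q r F) i = (blab p i,
         (\<lambda>j\<in>{j \<in> bpos q. blab q j = blab p i}. fst F (i,j),
          \<lambda>j\<in>{j \<in> bpos q. blab q j = blab p i}. \<lambda>y\<in>bdir r (fst F (i,j)). snd (snd F (i,j) y)))"
  "i \<notin> bpos p \<Longrightarrow> fst (curry_map C d p q r F) i = undefined"
  "i \<in> bpos p \<Longrightarrow> snd (curry_map C d p q r F) i = restrict (\<lambda>(j,y). fst (snd F (i,j) y))
                   {(j,y). j \<in> bpos q \<and> blab q j = blab p i \<and> y \<in> bdir r (fst F (i,j))}"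
  "i \<notin> bpos p \<Longrightarrow> snd (curry_map C d p q r F) i = undefined"
  by (simp_all add: curry_map_def)

lemma curry_in:
  assumes wf: "wf_bicomod C d p" "wf_bicomod C d r"
    and F: "F \<in> bhom d (tensor p q) r"
  shows "curry_map C d p q r F \<in> bhom d p (ihom C d q r)"
proof -
  obtain F1 F2 where Fe: "F = (F1,F2)" by (cases F)
  note FD = bhomD[OF F[unfolded Fe]]
  let ?c = "curry_map C d p q r F"
  have pin: "fst ?c i \<in> bpos (ihom C d q r)" if i: "i \<in> bpos p" for i
  proof -
    have cprj: "copresheaf d (bdir r (F1 (i,j))) (bob r (F1 (i,j))) (bact r (F1 (i,j)))"
      if "(i,j) \<in> bpos (tensor p q)" for j
      using wf(2) FD(1)[OF that] unfolding wf_bicomod_def by auto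
    have "blab p i \<in> C" using wf(1) i unfolding wf_bicomod_def by auto
    moreover have "(\<lambda>j\<in>{j \<in> bpos q. blab q j = blab p i}. F1 (i,j),
          \<lambda>j\<in>{j \<in> bpos q. blab q j = blab p i}. \<lambda>y\<in>bdir r (F1 (i,j)). snd (F2 (i,j) y))
          \<in> qrmaps d q r (blab p i)"
    proof (rule qrmapsI)
      fix j assume j: "j \<in> bpos q" "blab q j = blab p i"
      then have ij: "(i,j) \<in> bpos (tensor p q)" using i by (simp add: tensor_simps)
      show "(\<lambda>j\<in>{j \<in> bpos q. blab q j = blab p i}. F1 (i,j)) j \<in> bpos r \<and>
        blab r ((\<lambda>j\<in>{j \<in> bpos q. blab q j = blab p i}. F1 (i,j)) j) = blab p i"
        using FD(1,2)[OF ij] j by (simp add: tensor_simps)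
      show "cmor d (bdir r ((\<lambda>j\<in>{j \<in> bpos q. blab q j = blab p i}. F1 (i,j)) j))
         (bob r ((\<lambda>j\<in>{j \<in> bpos q. blab q j = blab p i}. F1 (i,j)) j))
         (bact r ((\<lambda>j\<in>{j \<in> bpos q. blab q j = blab p i}. F1 (i,j)) j)) (bdir q j) (bob q j) (bact q j)
         ((\<lambda>j\<in>{j \<in> bpos q. blab q j = blab p i}. \<lambda>y\<in>bdir r (F1 (i,j)). snd (F2 (i,j) y)) j)"
        using cmor_tensor_proj(2)[OF FD(5)[OF ij] cprj[OF ij]] j by simp
    qed auto
    ultimately show ?thesis using i by (simp add: curry_fst ihom_pos Fe)
  qed
  have "(fst ?c, snd ?c) \<in> bhom d p (ihom C d q r)"
  proof (rule bhomI)
    show "fst ?c \<in> bpos p \<rightarrow>\<^sub>E bpos (ihom C d q r)" using pin curry_fst(2)[of _ p C d q r F] by (auto simp: PiE_def extensional_def)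
    show "snd ?c \<in> extensional (bpos p)" using curry_fst(4)[of _ p C d q r F] by (auto simp: extensional_def)
    fix i assume i: "i \<in> bpos p"
    show "blab (ihom C d q r) (fst ?c i) = blab p i" using i by (simp add: curry_fst ihom_simps)
    define g where "g = (\<lambda>j\<in>{j \<in> bpos q. blab q j = blab p i}. F1 (i,j))"
    define h where "h = (\<lambda>j\<in>{j \<in> bpos q. blab q j = blab p i}. \<lambda>y\<in>bdir r (F1 (i,j)). snd (F2 (i,j) y))"
    have ci: "fst ?c i = (blab p i, (g,h))" using i by (simp add: curry_fst g_def h_def Fe)
    have S: "{(j,y). j \<in> bpos q \<and> blab q j = blab p i \<and> y \<in> bdir r (F1 (i,j))}
        = bdir (ihom C d q r) (blab p i, (g,h))" by (auto simp: ihom_simps g_def)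
    have si: "snd ?c i = restrict (\<lambda>(j,y). fst (F2 (i,j) y)) (bdir (ihom C d q r) (blab p i, (g,h)))"
      using i S by (simp add: curry_fst Fe)
    show "cmor d (bdir (ihom C d q r) (fst ?c i)) (bob (ihom C d q r) (fst ?c i)) (bact (ihom C d q r) (fst ?c i))
          (bdir p i) (bob p i) (bact p i) (snd ?c i)"
      unfolding ci si cmor_def
    proof (intro conjI ballI impI)
      have "fst (F2 (i,j) y) \<in> bdir p i" if "j \<in> bpos q" "blab q j = blab p i" "y \<in> bdir r (g j)" for j y
      proof -
        have ij: "(i,j) \<in> bpos (tensor p q)" using i that by (simp add: tensor_simps)
        have cpr: "copresheaf d (bdir r (F1 (i,j))) (bob r (F1 (i,j))) (bact r (F1 (i,j)))"
          using wf(2) FD(1)[OF ij] unfolding wf_bicomod_def by auto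
        show ?thesis using cmorD(1)[OF cmor_tensor_proj(1)[OF FD(5)[OF ij] cpr], of y] that by (simp add: g_def)
      qed
      then show "restrict (\<lambda>(j,y). fst (F2 (i,j) y)) (bdir (ihom C d q r) (blab p i, (g,h)))
          \<in> bdir (ihom C d q r) (blab p i, g, h) \<rightarrow>\<^sub>E bdir p i"
        by (auto simp: PiE_def Pi_def ihom_simps)
    next
      fix z assume z: "z \<in> bdir (ihom C d q r) (blab p i, g, h)"
      then obtain j y where ze: "z = (j,y)" and j: "j \<in> bpos q" "blab q j = blab p i" and y: "y \<in> bdir r (F1 (i,j))"
        by (auto simp: ihom_simps g_def)
      have ij: "(i,j) \<in> bpos (tensor p q)" using i j by (simp add: tensor_simps)
      have cpr: "copresheaf d (bdir r (F1 (i,j))) (bob r (F1 (i,j))) (bact r (F1 (i,j)))"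
        using wf(2) FD(1)[OF ij] unfolding wf_bicomod_def by auto
      note PC = cmorD[OF cmor_tensor_proj(1)[OF FD(5)[OF ij] cpr]]
      show "bob p i (restrict (\<lambda>(j,y). fst (F2 (i,j) y)) (bdir (ihom C d q r) (blab p i, (g,h))) z) =
          bob (ihom C d q r) (blab p i, g, h) z"
        using z PC(2)[OF y] j by (simp add: ze ihom_simps g_def)
      fix f assume f: "f \<in> car d" and ob: "bob (ihom C d q r) (blab p i, g, h) z = cdom d f"
      have ob': "bob r (F1 (i,j)) y = cdom d f" using ob j by (simp add: ze ihom_simps g_def)
      have act_in: "bact r (F1 (i,j)) f y \<in> bdir r (F1 (i,j))" using cpr f y ob' unfolding copresheaf_def by auto
      show "restrict (\<lambda>(j,y). fst (F2 (i,j) y)) (bdir (ihom C d q r) (blab p i, (g,h)))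
             (bact (ihom C d q r) (blab p i, g, h) f z) =
           bact p i f (restrict (\<lambda>(j,y). fst (F2 (i,j) y)) (bdir (ihom C d q r) (blab p i, (g,h))) z)"
        using PC(3)[OF f y ob'] act_in y j by (simp add: ze ihom_simps g_def)
    qed
  qed
  then show ?thesis by simp
qed


lemma curry_inj:
  assumes F: "F \<in> bhom d (tensor p q) r" and F': "F' \<in> bhom d (tensor p q) r"
    and eq: "curry_map C d p q r F = curry_map C d p q r F'"
  shows "F = F'"
proof -
  obtain F1 F2 where Fe: "F = (F1,F2)" by (cases F)
  obtain F1' F2' where F'e: "F' = (F1',F2')" by (cases F')
  note FD = bhomD[OF F[unfolded Fe]] and FD' = bhomD[OF F'[unfolded F'e]]
  have e1: "fst (curry_map C d p q r F) i = fst (curry_map C d p q r F') i" for i using eq by simp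
  have e2: "snd (curry_map C d p q r F) i = snd (curry_map C d p q r F') i" for i using eq by simp
  have P: "F1 ij = F1' ij \<and> F2 ij = F2' ij" for ij
  proof (cases "ij \<in> bpos (tensor p q)")
    case False then show ?thesis using FD(3,4) FD'(3,4) by simp
  next
    case True
    then obtain i j where ije: "ij = (i,j)" and i: "i \<in> bpos p" and j: "j \<in> bpos q" "blab q j = blab p i"
      by (auto simp: tensor_simps)
    have E1: "(\<lambda>j\<in>{j \<in> bpos q. blab q j = blab p i}. F1 (i,j)) = (\<lambda>j\<in>{j \<in> bpos q. blab q j = blab p i}. F1' (i,j))"
      and E2: "(\<lambda>j\<in>{j \<in> bpos q. blab q j = blab p i}. \<lambda>y\<in>bdir r (F1 (i,j)). snd (F2 (i,j) y)) =
               (\<lambda>j\<in>{j \<in> bpos q. blab q j = blab p i}. \<lambda>y\<in>bdir r (F1' (i,j)). snd (F2' (i,j) y))"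
      using e1[of i] i by (simp_all add: curry_fst Fe F'e)
    have f1: "F1 (i,j) = F1' (i,j)" using fun_cong[OF E1, of j] j by simp
    have E3: "restrict (\<lambda>(j,y). fst (F2 (i,j) y))
                   {(j,y). j \<in> bpos q \<and> blab q j = blab p i \<and> y \<in> bdir r (F1 (i,j))} =
              restrict (\<lambda>(j,y). fst (F2' (i,j) y))
                   {(j,y). j \<in> bpos q \<and> blab q j = blab p i \<and> y \<in> bdir r (F1' (i,j))}"
      using e2[of i] i by (simp add: curry_fst Fe F'e)
    have "F2 (i,j) y = F2' (i,j) y" for y
    proof (cases "y \<in> bdir r (F1 (i,j))")
      case True
      have a: "snd (F2 (i,j) y) = snd (F2' (i,j) y)" using fun_cong[OF fun_cong[OF E2, of j], of y] j True f1 by simp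
      have b: "fst (F2 (i,j) y) = fst (F2' (i,j) y)" using fun_cong[OF E3, of "(j,y)"] j True f1 by simp
      show ?thesis using a b by (simp add: prod_eq_iff)
    next
      case False
      have ij: "(i,j) \<in> bpos (tensor p q)" using True ije by simp
      show ?thesis using cmorD(4)[OF FD(5)[OF ij] False] cmorD(4)[OF FD'(5)[OF ij]] False f1 by simp
    qed
    then show ?thesis using f1 ije by auto
  qed
  show ?thesis using P by (simp add: Fe F'e fun_eq_iff)
qed


lemma curry_surj:
  assumes wf: "wf_bicomod C d r"
    and G: "G \<in> bhom d p (ihom C d q r)"
  shows "\<exists>F \<in> bhom d (tensor p q) r. curry_map C d p q r F = G"
proof -
  obtain G1 G2 where Ge: "G = (G1,G2)" by (cases G)
  note GD = bhomD[OF G[unfolded Ge]]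
  define gi where "gi i = fst (snd (G1 i))" for i
  define hi where "hi i = snd (snd (G1 i))" for i
  have G1e: "G1 i = (blab p i, (gi i, hi i))" if "i \<in> bpos p" for i
    using GD(2)[OF that] by (simp add: gi_def hi_def ihom_simps prod_eq_iff)
  have qr: "(gi i, hi i) \<in> qrmaps d q r (blab p i)" if "i \<in> bpos p" for i
    using GD(1)[OF that] G1e[OF that] by (simp add: ihom_pos)
  define F1 where "F1 = (\<lambda>(i,j)\<in>bpos (tensor p q). gi i j)"
  define F2 where "F2 = (\<lambda>(i,j)\<in>bpos (tensor p q). \<lambda>y\<in>bdir r (gi i j). (G2 i (j,y), hi i j y))"
  have ijfacts: "gi i j \<in> bpos r" "blab r (gi i j) = blab p i"
    "cmor d (bdir r (gi i j)) (bob r (gi i j)) (bact r (gi i j)) (bdir q j) (bob q j) (bact q j) (hi i j)"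
    "cmor d (bdir (ihom C d q r) (blab p i, (gi i, hi i))) (bob (ihom C d q r) (blab p i, (gi i, hi i)))
       (bact (ihom C d q r) (blab p i, (gi i, hi i))) (bdir p i) (bob p i) (bact p i) (G2 i)"
    "copresheaf d (bdir r (gi i j)) (bob r (gi i j)) (bact r (gi i j))"
    if "i \<in> bpos p" "j \<in> bpos q" "blab q j = blab p i" for i j
  proof -
    note QD = qrmapsD[OF qr[OF that(1)]]
    show "gi i j \<in> bpos r" "blab r (gi i j) = blab p i"
      "cmor d (bdir r (gi i j)) (bob r (gi i j)) (bact r (gi i j)) (bdir q j) (bob q j) (bact q j) (hi i j)"
      using QD that by auto
    show "cmor d (bdir (ihom C d q r) (blab p i, (gi i, hi i))) (bob (ihom C d q r) (blab p i, (gi i, hi i)))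
       (bact (ihom C d q r) (blab p i, (gi i, hi i))) (bdir p i) (bob p i) (bact p i) (G2 i)"
      using GD(5)[OF that(1)] G1e[OF that(1)] by simp
    show "copresheaf d (bdir r (gi i j)) (bob r (gi i j)) (bact r (gi i j))"
      using wf QD that unfolding wf_bicomod_def by auto
  qed
  have Fin: "(F1,F2) \<in> bhom d (tensor p q) r"
  proof (rule bhomI)
    show "F1 \<in> bpos (tensor p q) \<rightarrow>\<^sub>E bpos r" using ijfacts(1) by (auto simp: F1_def tensor_simps PiE_def Pi_def)
    show "F2 \<in> extensional (bpos (tensor p q))" by (simp add: F2_def)
    fix ij assume ij: "ij \<in> bpos (tensor p q)"
    then obtain i j where ije: "ij = (i,j)" and i: "i \<in> bpos p" and j: "j \<in> bpos q" "blab q j = blab p i"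
      by (auto simp: tensor_simps)
    show "blab r (F1 ij) = blab (tensor p q) ij" using ij ijfacts(2)[OF i j] by (simp add: F1_def ije tensor_simps)
    note HC = cmorD[OF ijfacts(3)[OF i j]] and GC = cmorD[OF ijfacts(4)[OF i j]]
    note cp = ijfacts(5)[OF i j]
    have F1ij: "F1 ij = gi i j" using ij by (simp add: F1_def ije)
    have F2ij: "F2 ij = (\<lambda>y\<in>bdir r (gi i j). (G2 i (j,y), hi i j y))" using ij by (simp add: F2_def ije)
    have jy: "(j,y) \<in> bdir (ihom C d q r) (blab p i, (gi i, hi i))" if "y \<in> bdir r (gi i j)" for y
      using that j by (simp add: ihom_simps)
    show "cmor d (bdir r (F1 ij)) (bob r (F1 ij)) (bact r (F1 ij)) (bdir (tensor p q) ij) (bob (tensor p q) ij)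
          (bact (tensor p q) ij) (F2 ij)"
      unfolding F1ij F2ij unfolding ije cmor_def tensor_simps
    proof (intro conjI ballI impI)
      show "(\<lambda>y\<in>bdir r (gi i j). (G2 i (j, y), hi i j y)) \<in> bdir r (gi i j) \<rightarrow>\<^sub>E
            {(x, y). x \<in> bdir p i \<and> y \<in> bdir q j \<and> bob p i x = bob q j y}"
        using GC(1)[OF jy] GC(2)[OF jy] HC(1) HC(2) by (auto simp: PiE_def Pi_def ihom_simps)
    next
      fix y assume y: "y \<in> bdir r (gi i j)"
      show "(case (\<lambda>y\<in>bdir r (gi i j). (G2 i (j, y), hi i j y)) y of (x, y) \<Rightarrow> bob p i x) = bob r (gi i j) y"
        using y GC(2)[OF jy[OF y]] by (simp add: ihom_simps)
      fix f assume f: "f \<in> car d" and ob: "bob r (gi i j) y = cdom d f"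
      have act_in: "bact r (gi i j) f y \<in> bdir r (gi i j)" using cp f y ob unfolding copresheaf_def by auto
      have g3: "G2 i (j, bact r (gi i j) f y) = bact p i f (G2 i (j,y))"
        using GC(3)[OF f jy[OF y]] ob by (simp add: ihom_simps)
      show "(\<lambda>y\<in>bdir r (gi i j). (G2 i (j, y), hi i j y)) (bact r (gi i j) f y) =
           (case (\<lambda>y\<in>bdir r (gi i j). (G2 i (j, y), hi i j y)) y of
            (x, y) \<Rightarrow> (bact p i f x, bact q j f y))"
        using y act_in g3 HC(3)[OF f y ob] by simp
    qed
  qed
  have "curry_map C d p q r (F1,F2) = G"
  proof -
    have "fst (curry_map C d p q r (F1,F2)) i = G1 i \<and> snd (curry_map C d p q r (F1,F2)) i = G2 i" for i
    proof (cases "i \<in> bpos p")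
      case False then show ?thesis using GD(3,4) by (simp add: curry_fst)
    next
      case i: True
      note QD = qrmapsD[OF qr[OF i]]
      have a: "(\<lambda>j\<in>{j \<in> bpos q. blab q j = blab p i}. F1 (i,j)) = gi i"
        using QD(3) i by (auto simp: fun_eq_iff F1_def tensor_simps extensional_def)
      have b: "(\<lambda>j\<in>{j \<in> bpos q. blab q j = blab p i}. \<lambda>y\<in>bdir r (F1 (i,j)). snd (F2 (i,j) y)) = hi i"
      proof (rule ext)
        fix j show "(\<lambda>j\<in>{j \<in> bpos q. blab q j = blab p i}. \<lambda>y\<in>bdir r (F1 (i,j)). snd (F2 (i,j) y)) j = hi i j"
        proof (cases "j \<in> bpos q \<and> blab q j = blab p i")
          case True
          then have "(i,j) \<in> bpos (tensor p q)" using i by (simp add: tensor_simps)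
          then show ?thesis using True cmorD(4)[OF ijfacts(3)[OF i]] by (auto simp: fun_eq_iff F1_def F2_def)
        next
          case False then show ?thesis using QD(4) by (auto simp: extensional_def)
        qed
      qed
      have c: "restrict (\<lambda>(j,y). fst (F2 (i,j) y))
                   {(j,y). j \<in> bpos q \<and> blab q j = blab p i \<and> y \<in> bdir r (F1 (i,j))} = G2 i"
      proof (rule ext)
        fix z show "restrict (\<lambda>(j,y). fst (F2 (i,j) y))
                   {(j,y). j \<in> bpos q \<and> blab q j = blab p i \<and> y \<in> bdir r (F1 (i,j))} z = G2 i z"
        proof (cases "z \<in> bdir (ihom C d q r) (blab p i, (gi i, hi i))")
          case True
          then obtain j y where ze: "z = (j,y)" and j: "j \<in> bpos q" "blab q j = blab p i" and y: "y \<in> bdir r (gi i j)"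
            by (auto simp: ihom_simps)
          have "(i,j) \<in> bpos (tensor p q)" using i j by (simp add: tensor_simps)
          then show ?thesis using j y by (simp add: ze F1_def F2_def)
        next
          case False
          have "z \<notin> {(j,y). j \<in> bpos q \<and> blab q j = blab p i \<and> y \<in> bdir r (F1 (i,j))}"
            using False i by (auto simp: ihom_simps F1_def tensor_simps)
          then show ?thesis using cmorD(4)[OF GD(5)[OF i]] False G1e[OF i] by simp
        qed
      qed
      show ?thesis using i a b c G1e[OF i] by (simp add: curry_fst)
    qed
    then show ?thesis by (simp add: Ge prod_eq_iff fun_eq_iff)
  qed
  then show ?thesis using Fin by blast
qed


lemma curry_bij:
  assumes wf: "wf_bicomod C d p" "wf_bicomod C d r"
  shows "bij_betw (curry_map C d p q r) (bhom d (tensor p q) r) (bhom d p (ihom C d q r))"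
  unfolding bij_betw_def
proof
  show "inj_on (curry_map C d p q r) (bhom d (tensor p q) r)"
    by (rule inj_onI) (rule curry_inj)
  show "curry_map C d p q r ` bhom d (tensor p q) r = bhom d p (ihom C d q r)"
  proof
    show "curry_map C d p q r ` bhom d (tensor p q) r \<subseteq> bhom d p (ihom C d q r)"
      using curry_in[OF wf] by (rule image_subsetI)
    show "bhom d p (ihom C d q r) \<subseteq> curry_map C d p q r ` bhom d (tensor p q) r"
    proof
      fix G assume "G \<in> bhom d p (ihom C d q r)"
      then obtain F where "F \<in> bhom d (tensor p q) r" "curry_map C d p q r F = G"
        using curry_surj[OF wf(2)] by blast
      then show "G \<in> curry_map C d p q r ` bhom d (tensor p q) r" by (rule rev_image_eqI[OF _ sym])
    qed
  qed
qed

lemma tensor_map_simps: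
  "(i,j) \<in> bpos (tensor p' q') \<Longrightarrow> fst (tensor_map p q p' q' A B) (i,j) = (fst A i, fst B j)"
  "(i,j) \<in> bpos (tensor p' q') \<Longrightarrow> snd (tensor_map p q p' q' A B) (i,j) =
     restrict (\<lambda>(x,y). (snd A i x, snd B j y)) (bdir (tensor p q) (fst A i, fst B j))"
  by (simp_all add: tensor_map_def)



lemma bhomD_fst: "x \<in> bhom d m n \<Longrightarrow> i \<in> bpos m \<Longrightarrow> fst x i \<in> bpos n"
  using bhomD(1)[of "fst x" "snd x"] by simp

lemma curry_natural:
  assumes wf: "wf_bicomod C d p" "wf_bicomod C d r" "wf_bicomod C d q'" "wf_bicomod C d r'"
    and A: "A \<in> bhom d p' p" and B: "B \<in> bhom d q' q" and G: "G \<in> bhom d r r'"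
    and F: "F \<in> bhom d (tensor p q) r"
  shows "curry_map C d p' q' r'
          (bcomp (tensor p' q') r' (bcomp (tensor p' q') r (tensor_map p q p' q' A B) F) G)
        = bcomp p' (ihom C d q' r')
            (bcomp p' (ihom C d q r) A (curry_map C d p q r F))
            (ihom_map C d q r q' r' B G)"
proof -
  obtain a1 a2 where Ae: "A = (a1,a2)" by (cases A)
  obtain b1 b2 where Be: "B = (b1,b2)" by (cases B)
  obtain e1 e2 where Ge: "G = (e1,e2)" by (cases G)
  obtain F1 F2 where Fe: "F = (F1,F2)" by (cases F)
  note AD = bhomD[OF A[unfolded Ae]] and BD = bhomD[OF B[unfolded Be]]
  note ED = bhomD[OF G[unfolded Ge]] and FD = bhomD[OF F[unfolded Fe]]
  let ?TM = "tensor_map p q p' q' A B"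
  let ?H = "bcomp (tensor p' q') r ?TM F"
  let ?K = "bcomp (tensor p' q') r' ?H G"
  let ?M = "bcomp p' (ihom C d q r) A (curry_map C d p q r F)"
  let ?N = "ihom_map C d q r q' r' B G"
  let ?L = "curry_map C d p' q' r' ?K"
  let ?R = "bcomp p' (ihom C d q' r') ?M ?N"
  have jf: "a1 i \<in> bpos p" "blab p (a1 i) = blab p' i" "b1 j \<in> bpos q" "blab q (b1 j) = blab p (a1 i)"
     "(a1 i, b1 j) \<in> bpos (tensor p q)" "(i,j) \<in> bpos (tensor p' q')" "F1 (a1 i, b1 j) \<in> bpos r"
    if "i \<in> bpos p'" "j \<in> bpos q'" "blab q' j = blab p' i" for i j
  proof -
    show 1: "a1 i \<in> bpos p" "blab p (a1 i) = blab p' i" "b1 j \<in> bpos q" "blab q (b1 j) = blab p (a1 i)"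
      using AD(1,2)[OF that(1)] BD(1,2)[OF that(2)] that(3) by auto
    show 2: "(a1 i, b1 j) \<in> bpos (tensor p q)" using 1 by (simp add: tensor_simps)
    show "(i,j) \<in> bpos (tensor p' q')" using that by (simp add: tensor_simps)
    show "F1 (a1 i, b1 j) \<in> bpos r" using FD(1)[OF 2] .
  qed
  have Kf: "fst ?K (i,j) = e1 (F1 (a1 i, b1 j))"
    if "i \<in> bpos p'" "j \<in> bpos q'" "blab q' j = blab p' i" for i j
    using jf[OF that] by (simp add: bcomp_simps tensor_map_simps Ae Be Ge Fe)
  have Ks: "snd ?K (i,j) = (\<lambda>w\<in>bdir r' (e1 (F1 (a1 i, b1 j))).
       (a2 i (fst (F2 (a1 i, b1 j) (e2 (F1 (a1 i, b1 j)) w))), b2 j (snd (F2 (a1 i, b1 j) (e2 (F1 (a1 i, b1 j)) w)))))"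
    if "i \<in> bpos p'" "j \<in> bpos q'" "blab q' j = blab p' i" for i j
  proof (rule ext)
    fix w
    note jj = jf[OF that]
    show "snd ?K (i,j) w = (\<lambda>w\<in>bdir r' (e1 (F1 (a1 i, b1 j))).
       (a2 i (fst (F2 (a1 i, b1 j) (e2 (F1 (a1 i, b1 j)) w))), b2 j (snd (F2 (a1 i, b1 j) (e2 (F1 (a1 i, b1 j)) w))))) w"
    proof (cases "w \<in> bdir r' (e1 (F1 (a1 i, b1 j)))")
      case True
      have z: "e2 (F1 (a1 i, b1 j)) w \<in> bdir r (F1 (a1 i, b1 j))" using cmorD(1)[OF ED(5)[OF jj(7)] True] .
      have u: "F2 (a1 i, b1 j) (e2 (F1 (a1 i, b1 j)) w) \<in> bdir (tensor p q) (a1 i, b1 j)"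
        using cmorD(1)[OF FD(5)[OF jj(5)] z] .
      show ?thesis using True z u jj by (simp add: bcomp_simps tensor_map_simps Ae Be Ge Fe case_prod_beta)
    next
      case False then show ?thesis using jj by (simp add: bcomp_simps tensor_map_simps Ae Be Ge Fe)
    qed
  qed
  have key: "fst ?L i = fst ?R i \<and> snd ?L i = snd ?R i" if i: "i \<in> bpos p'" for i
  proof -
    define a where "a = blab p' i"
    define g where "g = (\<lambda>j\<in>{j \<in> bpos q. blab q j = blab p (a1 i)}. F1 (a1 i, j))"
    define h where "h = (\<lambda>j\<in>{j \<in> bpos q. blab q j = blab p (a1 i)}. \<lambda>y\<in>bdir r (F1 (a1 i,j)). snd (F2 (a1 i,j) y))"
    have ai: "a1 i \<in> bpos p" "blab p (a1 i) = a" using AD(1,2)[OF i] by (auto simp: a_def)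
    have cF: "fst (curry_map C d p q r F) (a1 i) = (a, (g,h))"
      using ai by (simp add: curry_fst g_def h_def Fe a_def)
    have cFin: "(a, (g,h)) \<in> bpos (ihom C d q r)"
      using bhomD_fst[OF curry_in[OF wf(1,2) F] ai(1)] cF by simp
    have Mi: "fst ?M i = (a,(g,h))" using i cF by (simp add: bcomp_simps Ae)
    define g' where "g' = (\<lambda>j\<in>{j \<in> bpos q'. blab q' j = a}. e1 (g (b1 j)))"
    define h' where "h' = (\<lambda>j\<in>{j \<in> bpos q'. blab q' j = a}.
            \<lambda>y\<in>bdir r' (e1 (g (b1 j))). b2 j (h (b1 j) (e2 (g (b1 j)) y)))"
    have Ni: "fst ?N (a,(g,h)) = (a,(g',h'))" using cFin by (simp add: ihom_map_fst g'_def h'_def Be Ge)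
    have gb: "g (b1 j) = F1 (a1 i, b1 j)" if "j \<in> bpos q'" "blab q' j = a" for j
      using jf[OF i that(1)] that by (simp add: g_def a_def)
    have Lf: "fst ?L i = (a, (g', h'))"
    proof -
      have 1: "(\<lambda>j\<in>{j \<in> bpos q'. blab q' j = blab p' i}. fst ?K (i,j)) = g'"
        using Kf[OF i] gb by (auto simp: fun_eq_iff g'_def a_def)
      have 2: "(\<lambda>j\<in>{j \<in> bpos q'. blab q' j = blab p' i}. \<lambda>y\<in>bdir r' (fst ?K (i,j)). snd (snd ?K (i,j) y)) = h'"
      proof (rule ext)+
        fix j y
        show "(\<lambda>j\<in>{j \<in> bpos q'. blab q' j = blab p' i}. \<lambda>y\<in>bdir r' (fst ?K (i,j)). snd (snd ?K (i,j) y)) j y = h' j y"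
        proof (cases "j \<in> bpos q' \<and> blab q' j = a")
          case True
          note jj = jf[OF i conjunct1[OF True] conjunct2[OF True, unfolded a_def]]
          show ?thesis
          proof (cases "y \<in> bdir r' (e1 (F1 (a1 i, b1 j)))")
            case y: True
            have z: "e2 (F1 (a1 i, b1 j)) y \<in> bdir r (F1 (a1 i, b1 j))" using cmorD(1)[OF ED(5)[OF jj(7)] y] .
            show ?thesis using True y z jj Kf[OF i] Ks[OF i] gb
              by (simp add: h'_def a_def h_def)
          next
            case False
            then show ?thesis using True jj Kf[OF i] gb by (simp add: h'_def a_def)
          qed
        next
          case False
          then have nj: "j \<notin> {j \<in> bpos q'. blab q' j = blab p' i}" by (simp add: a_def)
          have L: "(\<lambda>j\<in>{j \<in> bpos q'. blab q' j = blab p' i}. \<lambda>y\<in>bdir r' (fst ?K (i,j)). snd (snd ?K (i,j) y)) j = undefined"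
            using nj unfolding restrict_def by (simp only: if_False)
          have R: "h' j = undefined" using nj unfolding h'_def a_def restrict_def by (simp only: if_False)
          show ?thesis by (simp only: L R)
        qed
      qed
      show ?thesis using i 1 2 by (simp add: curry_fst a_def)
    qed
    have Rf: "fst ?R i = (a, (g', h'))" using i Mi Ni by (simp add: bcomp_simps)
    have Ls: "snd ?L i = snd ?R i"
    proof (rule ext)
      fix z
      have Rs: "snd ?R i = (\<lambda>x\<in>bdir (ihom C d q' r') (a,(g',h')). snd ?M i (snd ?N (a,(g,h)) x))"
        using i Mi Ni by (simp add: bcomp_simps)
      have S: "{(j,y). j \<in> bpos q' \<and> blab q' j = blab p' i \<and> y \<in> bdir r' (fst ?K (i,j))} =
               bdir (ihom C d q' r') (a,(g',h'))"
        using Kf[OF i] gb by (auto simp: ihom_simps g'_def a_def)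
      have Lsi: "snd ?L i = restrict (\<lambda>(j,y). fst (snd ?K (i,j) y)) (bdir (ihom C d q' r') (a,(g',h')))"
        using i S by (simp add: curry_fst)
      show "snd ?L i z = snd ?R i z"
      proof (cases "z \<in> bdir (ihom C d q' r') (a,(g',h'))")
        case False then show ?thesis by (simp add: Lsi Rs)
      next
        case True
        then obtain j y where ze: "z = (j,y)" and j: "j \<in> bpos q'" "blab q' j = a" and y0: "y \<in> bdir r' (g' j)"
          by (auto simp: ihom_simps)
        note jj = jf[OF i j(1) j(2)[unfolded a_def]]
        have y: "y \<in> bdir r' (e1 (F1 (a1 i, b1 j)))" using y0 j gb by (simp add: g'_def)
        have zz: "e2 (F1 (a1 i, b1 j)) y \<in> bdir r (F1 (a1 i, b1 j))" using cmorD(1)[OF ED(5)[OF jj(7)] y] .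
        have Nd: "snd ?N (a,(g,h)) (j,y) = (b1 j, e2 (F1 (a1 i, b1 j)) y)"
          using cFin Ni True j gb by (simp add: ihom_map_snd ze Be Ge)
        have inM: "(b1 j, e2 (F1 (a1 i, b1 j)) y) \<in> bdir (ihom C d q r) (a,(g,h))"
          using jj zz j gb by (simp add: ihom_simps a_def)
        have Md: "snd ?M i (b1 j, e2 (F1 (a1 i, b1 j)) y) = a2 i (fst (F2 (a1 i, b1 j) (e2 (F1 (a1 i, b1 j)) y)))"
          using i inM cF ai jj zz by (simp add: bcomp_simps curry_fst Ae Fe a_def)
        show ?thesis using True Nd Md Ks[OF i j(1) j(2)[unfolded a_def]] y
          by (simp add: Lsi Rs ze)
      qed
    qed
    show ?thesis using Lf Rf Ls by simp
  qed
  have "fst ?L i = fst ?R i \<and> snd ?L i = snd ?R i" for i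
  proof (cases "i \<in> bpos p'")
    case True then show ?thesis using key by blast
  next
    case False then show ?thesis by (simp add: curry_fst bcomp_simps)
  qed
  then show ?thesis by (simp add: prod_eq_iff fun_eq_iff)
qed


theorem proposition2p46:
  fixes C :: "'c set" and d :: "('o,'m) cat"
    and p :: "('c,'i,'e,'o,'m) bicomod" and q :: "('c,'j,'f,'o,'m) bicomod"
    and r :: "('c,'k,'g,'o,'m) bicomod"
    and p' :: "('c,'i2,'e2,'o,'m) bicomod" and q' :: "('c,'j2,'f2,'o,'m) bicomod"
    and r' :: "('c,'k2,'g2,'o,'m) bicomod"
    and q'' :: "('c,'j3,'f3,'o,'m) bicomod" and r'' :: "('c,'k3,'g3,'o,'m) bicomod"
  assumes d: "small_cat d"
    and wf: "wf_bicomod C d p" "wf_bicomod C d q" "wf_bicomod C d r"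
      "wf_bicomod C d p'" "wf_bicomod C d q'" "wf_bicomod C d r'"
      "wf_bicomod C d q''" "wf_bicomod C d r''"
  shows
    "wf_bicomod C d (tensor p q) \<and>
     wf_bicomod C d (ihom C d q r) \<and>
     (\<forall>A B. A \<in> bhom d q' q \<longrightarrow> B \<in> bhom d r r' \<longrightarrow>
        ihom_map C d q r q' r' A B \<in> bhom d (ihom C d q r) (ihom C d q' r')) \<and>
     ihom_map C d q r q r (bid q) (bid r) = bid (ihom C d q r) \<and>
     (\<forall>A A' B B'. A \<in> bhom d q' q \<longrightarrow> A' \<in> bhom d q'' q' \<longrightarrow>
        B \<in> bhom d r r' \<longrightarrow> B' \<in> bhom d r' r'' \<longrightarrow>
        ihom_map C d q r q'' r'' (bcomp q'' q A' A) (bcomp r r'' B B')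
          = bcomp (ihom C d q r) (ihom C d q'' r'')
              (ihom_map C d q r q' r' A B) (ihom_map C d q' r' q'' r'' A' B')) \<and>
     bij_betw (curry_map C d p q r) (bhom d (tensor p q) r) (bhom d p (ihom C d q r)) \<and>
     (\<forall>A B G F. A \<in> bhom d p' p \<longrightarrow> B \<in> bhom d q' q \<longrightarrow> G \<in> bhom d r r' \<longrightarrow>
        F \<in> bhom d (tensor p q) r \<longrightarrow>
        curry_map C d p' q' r'
          (bcomp (tensor p' q') r' (bcomp (tensor p' q') r (tensor_map p q p' q' A B) F) G)
        = bcomp p' (ihom C d q' r')
            (bcomp p' (ihom C d q r) A (curry_map C d p q r F))
            (ihom_map C d q r q' r' B G))"
proof (intro conjI allI impI)
  show "wf_bicomod C d (tensor p q)" by (rule wf_tensor[OF wf(1,2)])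
  show "wf_bicomod C d (ihom C d q r)" by (rule wf_ihom[OF wf(2,3)])
  show "ihom_map C d q r q r (bid q) (bid r) = bid (ihom C d q r)" by (rule ihom_map_id)
  show "bij_betw (curry_map C d p q r) (bhom d (tensor p q) r) (bhom d p (ihom C d q r))"
    by (rule curry_bij[OF wf(1,3)])
  fix A B assume "A \<in> bhom d q' q" "B \<in> bhom d r r'"
  then show "ihom_map C d q r q' r' A B \<in> bhom d (ihom C d q r) (ihom C d q' r')"
    by (rule ihom_map_bhom[OF wf(5,6)])
next
  fix A A' B B' assume "A \<in> bhom d q' q" "A' \<in> bhom d q'' q'" "B \<in> bhom d r r'" "B' \<in> bhom d r' r''"
  then show "ihom_map C d q r q'' r'' (bcomp q'' q A' A) (bcomp r r'' B B')
          = bcomp (ihom C d q r) (ihom C d q'' r'')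
              (ihom_map C d q r q' r' A B) (ihom_map C d q' r' q'' r'' A' B')"
    by (rule ihom_map_comp[OF wf(5,6,7,8)])
next
  fix A B G F assume "A \<in> bhom d p' p" "B \<in> bhom d q' q" "G \<in> bhom d r r'" "F \<in> bhom d (tensor p q) r"
  then show "curry_map C d p' q' r'
          (bcomp (tensor p' q') r' (bcomp (tensor p' q') r (tensor_map p q p' q' A B) F) G)
        = bcomp p' (ihom C d q' r')
            (bcomp p' (ihom C d q r) A (curry_map C d p q r F))
            (ihom_map C d q r q' r' B G)"
    by (rule curry_natural[OF wf(1,3,5,6)])
qed

end
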